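(* Let $\mathcal A=(\Sigma,Q_\mathcal A,I_\mathcal A,F_\mathcal A,\delta_\mathcal A)$ and $\mathcal B=(\Sigma,Q_\mathcal B,I_\mathcal B,F_\mathcal B,\delta_\mathcal B)$ be NBA, and let $\sqsubseteq$ be either backward direct simulation or backward direct trace inclusion, computed on the disjoint union of $\mathcal A$ and $\mathcal B$. If for every $p\in F_\mathcal A$ there exists $q\in F_\mathcal B$ with $p\sqsubseteq q$, then $\mathcal L(\mathcal A)\subseteq\mathcal L(\mathcal B)$.
   Context: An NBA is $(\Sigma,Q,I,F,\delta)$ with $\delta\subseteq Q\times\Sigma\times Q$, assumed forward and backward complete (every state has, for every symbol, at least one incoming and one outgoing transition with that symbol). Traces $q_0\xrightarrow{\sigma_0}q_1\cdots$ are initial if $q_0\in I$; infinite traces are fair if they visit $F$ infinitely often; $\mathcal L$ is the set of infinite words with an initial fair trace. Backward direct simulation $\sqsubseteq^{\mathrm{bw\text{-}di}}$: in a game from configuration $(p_0,q_0)$, at round $i$ from $(p_i,q_i)$ Spoiler picks a transition $p_{i+1}\xrightarrow{\sigma_i}p_i$, Duplicator answers with $q_{i+1}\xrightarrow{\sigma_i}q_i$; Duplicator wins the infinite play if for all $i$, $p_i\in F\Rightarrow q_i\in F$ and $p_i\in I\Rightarrow q_i\in I$; $p\sqsubseteq^{\mathrm{bw\text{-}di}}q$ iff Duplicator has a winning strategy from $(p,q)$. Backward direct trace inclusion: $p\subseteq^{\mathrm{bw\text{-}di}}q$ iff for every finite word $\sigma_0\cdots\sigma_{m-1}$ and every initial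 finite trace $p_0\xrightarrow{\sigma_0}\cdots\xrightarrow{\sigma_{m-1}}p_m=p$ there is an initial finite trace $q_0\xrightarrow{\sigma_0}\cdots\xrightarrow{\sigma_{m-1}}q_m=q$ with $p_i\in F\Rightarrow q_i\in F$ for all $0\le i\le m$. *)

theory Defs
  imports Main "HOL-Library.Infinite_Set"
begin

record ('s, 'a) nba =
  alph   :: "'a set"
  states :: "'s set"
  init   :: "'s set"
  final  :: "'s set"
  trans  :: "('s \<times> 'a \<times> 's) set"

definition nba :: "('s, 'a) nba \<Rightarrow> bool" where
  "nba A \<longleftrightarrow> finite (states A) \<and> finite (alph A)
     \<and> init A \<subseteq> states A \<and> final A \<subseteq> states A
     \<and> trans A \<subseteq> states A \<times> alph A \<times> states A
     \<and> (\<forall>q\<in>states A. \<forall>a\<in>alph A. \<exists>q'. (q, a, q') \<in> trans A)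
     \<and> (\<forall>q\<in>states A. \<forall>a\<in>alph A. \<exists>q'. (q', a, q) \<in> trans A)"

definition lang :: "('s, 'a) nba \<Rightarrow> (nat \<Rightarrow> 'a) set" where
  "lang A = {w. \<exists>r. r 0 \<in> init A \<and> (\<forall>i. (r i, w i, r (Suc i)) \<in> trans A)
                    \<and> (\<exists>\<^sub>\<infinity>i. r i \<in> final A)}"

definition nba_union :: "('s, 'a) nba \<Rightarrow> ('t, 'a) nba \<Rightarrow> ('s + 't, 'a) nba" where
  "nba_union A B = \<lparr> alph = alph A \<union> alph B,
     states = Inl ` states A \<union> Inr ` states B,
     init = Inl ` init A \<union> Inr ` init B,
     final = Inl ` final A \<union> Inr ` final B,
     trans = (\<lambda>(p, a, q). (Inl p, a, Inl q)) ` trans A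
           \<union> (\<lambda>(p, a, q). (Inr p, a, Inr q)) ` trans B \<rparr>"

text \<open>A Duplicator strategy maps the history of
  configurations (p_0,q_0),...,(p_i,q_i), the history of symbols sigma_0..sigma_{i-1},
  and Spoiler's current move (sigma_i, p_{i+1}) to Duplicator's answer q_{i+1}.\<close>
definition bw_di_play ::
  "('s, 'a) nba \<Rightarrow> (('s \<times> 's) list \<Rightarrow> 'a list \<Rightarrow> 'a \<Rightarrow> 's \<Rightarrow> 's)
    \<Rightarrow> 's \<Rightarrow> 's \<Rightarrow> (nat \<Rightarrow> 's) \<Rightarrow> (nat \<Rightarrow> 's) \<Rightarrow> (nat \<Rightarrow> 'a) \<Rightarrow> bool" where
  "bw_di_play A strat p q ps qs ws \<longleftrightarrow>
     ps 0 = p \<and> qs 0 = q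
     \<and> (\<forall>i. (ps (Suc i), ws i, ps i) \<in> trans A)
     \<and> (\<forall>i. qs (Suc i) = strat (map (\<lambda>j. (ps j, qs j)) [0..<Suc i]) (map ws [0..<i])
                                 (ws i) (ps (Suc i)))"

definition bw_di_winning :: "('s, 'a) nba \<Rightarrow> (nat \<Rightarrow> 's) \<Rightarrow> (nat \<Rightarrow> 's) \<Rightarrow> (nat \<Rightarrow> 'a) \<Rightarrow> bool" where
  "bw_di_winning A ps qs ws \<longleftrightarrow>
     (\<forall>i. (qs (Suc i), ws i, qs i) \<in> trans A)
     \<and> (\<forall>i. (ps i \<in> final A \<longrightarrow> qs i \<in> final A) \<and> (ps i \<in> init A \<longrightarrow> qs i \<in> init A))"

definition bw_di_sim :: "('s, 'a) nba \<Rightarrow> 's \<Rightarrow> 's \<Rightarrow> bool" where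
  "bw_di_sim A p q \<longleftrightarrow>
     (\<exists>strat. \<forall>ps qs ws. bw_di_play A strat p q ps qs ws \<longrightarrow> bw_di_winning A ps qs ws)"

definition bw_di_trinc :: "('s, 'a) nba \<Rightarrow> 's \<Rightarrow> 's \<Rightarrow> bool" where
  "bw_di_trinc A p q \<longleftrightarrow>
     (\<forall>(w :: 'a list) ps. ps 0 \<in> init A \<and> (\<forall>i < length w. (ps i, w ! i, ps (Suc i)) \<in> trans A)
        \<and> ps (length w) = p \<longrightarrow>
       (\<exists>qs. qs 0 \<in> init A \<and> (\<forall>i < length w. (qs i, w ! i, qs (Suc i)) \<in> trans A)
        \<and> qs (length w) = q
        \<and> (\<forall>i \<le> length w. ps i \<in> final A \<longrightarrow> qs i \<in> final A)))"

end

theory Submission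
  imports Defs
begin

definition goodpre :: "('t,'a) nba \<Rightarrow> (nat \<Rightarrow> 'a) \<Rightarrow> (nat \<Rightarrow> bool) \<Rightarrow> nat \<Rightarrow> (nat \<Rightarrow> 't) \<Rightarrow> bool" where
  "goodpre B w Fa n f \<longleftrightarrow> f 0 \<in> init B \<and> (\<forall>i<n. (f i, w i, f (Suc i)) \<in> trans B)
     \<and> (\<forall>i\<le>n. Fa i \<longrightarrow> f i \<in> final B)"

definition extbl :: "('t,'a) nba \<Rightarrow> (nat \<Rightarrow> 'a) \<Rightarrow> (nat \<Rightarrow> bool) \<Rightarrow> nat \<Rightarrow> (nat \<Rightarrow> 't) \<Rightarrow> bool" where
  "extbl B w Fa m g \<longleftrightarrow> infinite {n. m \<le> n \<and> (\<exists>f. goodpre B w Fa n f \<and> (\<forall>i\<le>m. f i = g i))}"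

lemma ext_step:
  assumes "nba B" "extbl B w Fa m g"
  shows "\<exists>q. extbl B w Fa (Suc m) (g(Suc m := q))"
proof -
  let ?Sz = "{n. m \<le> n \<and> (\<exists>f. goodpre B w Fa n f \<and> (\<forall>i\<le>m. f i = g i))}"
  let ?S = "{n. Suc m \<le> n \<and> (\<exists>f. goodpre B w Fa n f \<and> (\<forall>i\<le>m. f i = g i))}"
  let ?T = "\<lambda>q. {n. Suc m \<le> n \<and> (\<exists>f. goodpre B w Fa n f \<and> (\<forall>i\<le>Suc m. f i = (g(Suc m := q)) i))}"
  have sub: "?Sz - {m} \<subseteq> ?S"
  proof
    fix n assume "n \<in> ?Sz - {m}"
    then show "n \<in> ?S" by (simp add: Suc_le_eq)
  qed
  have "infinite (?Sz - {m})" using assms(2) unfolding extbl_def by (rule infinite_remove)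
  hence inf: "infinite ?S" using sub finite_subset by blast
  have "?S \<subseteq> (\<Union>q\<in>states B. ?T q)"
  proof
    fix n assume "n \<in> ?S"
    then obtain f where n: "Suc m \<le> n" "goodpre B w Fa n f" "\<forall>i\<le>m. f i = g i" by auto
    have "m < n" using n(1) by simp
    hence "(f m, w m, f (Suc m)) \<in> trans B" using n(2) unfolding goodpre_def by blast
    hence "f (Suc m) \<in> states B" using assms(1) unfolding nba_def by auto
    moreover have "\<forall>i\<le>Suc m. f i = (g(Suc m := f (Suc m))) i" using n(3) le_Suc_eq by auto
    ultimately show "n \<in> (\<Union>q\<in>states B. ?T q)" using n by blast
  qed
  hence "infinite (\<Union>q\<in>states B. ?T q)" using inf finite_subset by blast
  moreover have "finite (states B)" using assms(1) unfolding nba_def by auto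
  ultimately have "\<exists>q\<in>states B. infinite (?T q)" using finite_UN by blast
  then obtain q where "infinite (?T q)" by blast
  thus ?thesis unfolding extbl_def by blast
qed

lemma ext_base:
  assumes "nba B" "infinite {n. \<exists>f. goodpre B w Fa n f}"
  shows "\<exists>q. extbl B w Fa 0 (\<lambda>_. q)"
proof -
  let ?T = "\<lambda>q. {n. 0 \<le> n \<and> (\<exists>f. goodpre B w Fa n f \<and> (\<forall>i\<le>0. f i = (\<lambda>_. q) i))}"
  have "{n. \<exists>f. goodpre B w Fa n f} \<subseteq> (\<Union>q\<in>init B. ?T q)"
  proof
    fix n assume "n \<in> {n. \<exists>f. goodpre B w Fa n f}"
    then obtain f where "goodpre B w Fa n f" by auto
    moreover hence "f 0 \<in> init B" unfolding goodpre_def by auto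
    ultimately show "n \<in> (\<Union>q\<in>init B. ?T q)" by auto
  qed
  hence "infinite (\<Union>q\<in>init B. ?T q)" using assms(2) finite_subset by blast
  moreover have "finite (init B)" using assms(1) unfolding nba_def by (auto intro: finite_subset)
  ultimately have "\<exists>q\<in>init B. infinite (?T q)" using finite_UN by blast
  then obtain q where "infinite (?T q)" by blast
  thus ?thesis unfolding extbl_def by blast
qed

primrec Gs :: "('t,'a) nba \<Rightarrow> (nat \<Rightarrow> 'a) \<Rightarrow> (nat \<Rightarrow> bool) \<Rightarrow> nat \<Rightarrow> nat \<Rightarrow> 't" where
  "Gs B w Fa 0 = (\<lambda>_. SOME q. extbl B w Fa 0 (\<lambda>_. q))"
| "Gs B w Fa (Suc m) = (Gs B w Fa m)(Suc m := SOME q. extbl B w Fa (Suc m) ((Gs B w Fa m)(Suc m := q)))"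

lemma Gs_ext:
  assumes "nba B" "infinite {n. \<exists>f. goodpre B w Fa n f}"
  shows "extbl B w Fa m (Gs B w Fa m)"
proof (induction m)
  case 0
  show ?case using someI_ex[OF ext_base[OF assms]] by simp
next
  case (Suc m)
  show ?case using someI_ex[OF ext_step[OF assms(1) Suc]] by (simp del: fun_upd_apply)
qed

lemma Gs_stable: assumes "i \<le> m" "m \<le> k" shows "Gs B w Fa k i = Gs B w Fa m i"
  using assms(2)
proof (induction k rule: dec_induct)
  case base then show ?case by simp
next
  case (step k) then show ?case using assms(1) by simp
qed

lemma koenig:
  assumes "nba B" "infinite {n. \<exists>f. goodpre B w Fa n f}"
  shows "\<exists>\<rho>. \<rho> 0 \<in> init B \<and> (\<forall>i. (\<rho> i, w i, \<rho> (Suc i)) \<in> trans B) \<and> (\<forall>i. Fa i \<longrightarrow> \<rho> i \<in> final B)"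
proof -
  define \<rho> where "\<rho> i = Gs B w Fa i i" for i
  have agree: "\<exists>n f. Suc i \<le> n \<and> goodpre B w Fa n f \<and> f i = \<rho> i \<and> f (Suc i) = \<rho> (Suc i)" for i
  proof -
    have "extbl B w Fa (Suc i) (Gs B w Fa (Suc i))" by (rule Gs_ext[OF assms])
    then obtain n where "n \<in> {n. Suc i \<le> n \<and> (\<exists>f. goodpre B w Fa n f \<and> (\<forall>j\<le>Suc i. f j = Gs B w Fa (Suc i) j))}"
      unfolding extbl_def using not_finite_existsD by blast
    then obtain f where f: "Suc i \<le> n" "goodpre B w Fa n f" "\<forall>j\<le>Suc i. f j = Gs B w Fa (Suc i) j" by auto
    have "Gs B w Fa (Suc i) i = \<rho> i" unfolding \<rho>_def by (rule Gs_stable) auto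
    hence h1: "f i = \<rho> i" using f(3) by simp
    have h2: "f (Suc i) = \<rho> (Suc i)" using f(3) unfolding \<rho>_def by blast
    show ?thesis using f(1,2) h1 h2 by blast
  qed
  have "\<rho> 0 \<in> init B"
  proof -
    obtain n f where "Suc 0 \<le> n" "goodpre B w Fa n f" "f 0 = \<rho> 0" using agree[of 0] by blast
    thus ?thesis unfolding goodpre_def by auto
  qed
  moreover have "(\<rho> i, w i, \<rho> (Suc i)) \<in> trans B" for i
  proof -
    obtain n f where "Suc i \<le> n" "goodpre B w Fa n f" "f i = \<rho> i" "f (Suc i) = \<rho> (Suc i)" using agree[of i] by blast
    thus ?thesis unfolding goodpre_def by (metis Suc_le_eq)
  qed
  moreover have "Fa i \<longrightarrow> \<rho> i \<in> final B" for i
  proof -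
    obtain n f where "Suc i \<le> n" "goodpre B w Fa n f" "f i = \<rho> i" using agree[of i] by blast
    thus ?thesis unfolding goodpre_def by (metis Suc_leD)
  qed
  ultimately show ?thesis by blast
qed

lemma U_simps:
  "(Inl p, a, Inl p') \<in> trans (nba_union A B) \<longleftrightarrow> (p, a, p') \<in> trans A"
  "(Inr q, a, Inr q') \<in> trans (nba_union A B) \<longleftrightarrow> (q, a, q') \<in> trans B"
  "Inl p \<in> init (nba_union A B) \<longleftrightarrow> p \<in> init A"
  "Inr q \<in> init (nba_union A B) \<longleftrightarrow> q \<in> init B"
  "Inl p \<in> final (nba_union A B) \<longleftrightarrow> p \<in> final A"
  "Inr q \<in> final (nba_union A B) \<longleftrightarrow> q \<in> final B"
  unfolding nba_union_def by (auto simp: image_iff; force)+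

lemma U_Inr_tgt: "(x, a, Inr q) \<in> trans (nba_union A B) \<Longrightarrow> \<exists>p. x = Inr p"
  unfolding nba_union_def by auto

lemma U_Inr_src: "(Inr q, a, x) \<in> trans (nba_union A B) \<Longrightarrow> \<exists>p. x = Inr p"
  unfolding nba_union_def by auto

lemma trinc_case:
  assumes tr: "bw_di_trinc (nba_union A B) (Inl (r n)) (Inr q)"
    and r0: "r 0 \<in> init A" and rt: "\<forall>i. (r i, w i, r (Suc i)) \<in> trans A"
  shows "\<exists>f. goodpre B w (\<lambda>i. r i \<in> final A) n f"
proof -
  let ?U = "nba_union A B"
  have "\<exists>qs. qs 0 \<in> init ?U \<and> (\<forall>i < length (map w [0..<n]). (qs i, map w [0..<n] ! i, qs (Suc i)) \<in> trans ?U)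
        \<and> qs (length (map w [0..<n])) = Inr q
        \<and> (\<forall>i \<le> length (map w [0..<n]). (\<lambda>i. Inl (r i)) i \<in> final ?U \<longrightarrow> qs i \<in> final ?U)"
    using tr unfolding bw_di_trinc_def
    apply (rule allE[where x="map w [0..<n]"])
    apply (erule allE[where x="\<lambda>i. Inl (r i)"])
    using r0 rt by (auto simp: U_simps)
  then obtain qs where q0: "qs 0 \<in> init ?U" and qt: "\<forall>i<n. (qs i, w i, qs (Suc i)) \<in> trans ?U"
    and qn: "qs n = Inr q" and qf: "\<forall>i\<le>n. r i \<in> final A \<longrightarrow> qs i \<in> final ?U"
    by (auto simp: U_simps)
  have inr: "\<exists>p. qs (n - d) = Inr p" if "d \<le> n" for d
    using that
  proof (induction d)
    case 0 then show ?case using qn by simp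
  next
    case (Suc d)
    then obtain p where p: "qs (n - d) = Inr p" by auto
    have e: "Suc (n - Suc d) = n - d" using Suc.prems by simp
    have "n - Suc d < n" using Suc.prems by simp
    hence "(qs (n - Suc d), w (n - Suc d), qs (Suc (n - Suc d))) \<in> trans ?U" using qt by blast
    hence "(qs (n - Suc d), w (n - Suc d), Inr p) \<in> trans ?U" using e p by simp
    thus ?case by (rule U_Inr_tgt)
  qed
  have inr': "qs i = Inr (projr (qs i))" if "i \<le> n" for i
    using inr[of "n - i"] that by auto
  define f where "f i = projr (qs i)" for i
  have "goodpre B w (\<lambda>i. r i \<in> final A) n f"
    unfolding goodpre_def
  proof (intro conjI allI impI)
    show "f 0 \<in> init B" using q0 inr'[of 0] unfolding f_def by (metis U_simps(4) zero_le)
  next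
    fix i assume "i < n"
    thus "(f i, w i, f (Suc i)) \<in> trans B" using qt inr'[of i] inr'[of "Suc i"] unfolding f_def
      by (metis U_simps(2) Suc_leI less_imp_le)
  next
    fix i assume "i \<le> n" "r i \<in> final A"
    thus "f i \<in> final B" using qf inr'[of i] unfolding f_def by (metis U_simps(6))
  qed
  thus ?thesis by blast
qed


definition predA :: "('s,'a) nba \<Rightarrow> 's \<Rightarrow> 'a \<times> 's" where
  "predA A x = (SOME pa. (snd pa, fst pa, x) \<in> trans A)"

lemma predA:
  assumes A: "nba A" and a: "a \<in> alph A" and x: "x \<in> states A"
  shows "(snd (predA A x), fst (predA A x), x) \<in> trans A"
proof -
  have bc: "\<forall>q\<in>states A. \<forall>a\<in>alph A. \<exists>q'. (q', a, q) \<in> trans A"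
    using A unfolding nba_def by (elim conjE) assumption
  then obtain p where p: "(p, a, x) \<in> trans A" using x a by blast
  have "(snd (a, p), fst (a, p), x) \<in> trans A" using p by simp
  hence "\<exists>pa. (snd pa, fst pa, x) \<in> trans A" by (rule exI)
  thus ?thesis unfolding predA_def by (rule someI_ex)
qed

lemma sim_case:
  fixes A :: "('s,'a) nba" and B :: "('t,'a) nba"
  assumes A: "nba A"
    and sim: "bw_di_sim (nba_union A B) (Inl (r n)) (Inr q)"
    and r0: "r 0 \<in> init A" and rt: "\<forall>i. (r i, w i, r (Suc i)) \<in> trans A"
  shows "\<exists>f. goodpre B w (\<lambda>i. r i \<in> final A) n f"
proof -
  let ?U = "nba_union A B"
  from sim obtain strat where strat:
    "\<And>ps qs ws. bw_di_play ?U strat (Inl (r n)) (Inr q) ps qs ws \<Longrightarrow> bw_di_winning ?U ps qs ws"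
    unfolding bw_di_sim_def by blast
  have tsub: "trans A \<subseteq> states A \<times> alph A \<times> states A" using A unfolding nba_def by (elim conjE)
  have "(r 0, w 0, r (Suc 0)) \<in> trans A" using rt by blast
  hence w0: "w 0 \<in> alph A" using tsub by blast
  have pre: "(snd (predA A x), fst (predA A x), x) \<in> trans A" if "x \<in> states A" for x
    by (rule predA[OF A w0 that])
  define c where "c = rec_nat (r 0) (\<lambda>_ x. snd (predA A x))"
  have c0: "c 0 = r 0" and cS: "c (Suc k) = snd (predA A (c k))" for k unfolding c_def by simp_all
  have cst: "c k \<in> states A" for k
  proof (induction k)
    case 0 have "init A \<subseteq> states A" using A unfolding nba_def by (elim conjE)
    then show ?case using c0 r0 by auto
  next
    case (Suc k) then show ?case using pre[of "c k"] tsub cS by auto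
  qed
  define ps where "ps i = (Inl (if i \<le> n then r (n - i) else c (i - n)) :: 's + 't)" for i :: nat
  define ws where "ws i = (if i < n then w (n - Suc i) else fst (predA A (c (i - n))))" for i
  have psle: "ps i = Inl (r (n - i))" if "i \<le> n" for i using that unfolding ps_def by simp
  have psge: "ps i = Inl (c (i - n))" if "n \<le> i" for i
    using that c0 unfolding ps_def by (cases "i = n") auto
  have wslt: "ws i = w (n - Suc i)" if "i < n" for i using that unfolding ws_def by simp
  have wsge: "ws i = fst (predA A (c (i - n)))" if "n \<le> i" for i using that unfolding ws_def by simp
  have pst: "(ps (Suc i), ws i, ps i) \<in> trans ?U" for i
  proof (cases "i < n")
    case True
    have "(Inl (r (n - Suc i)), w (n - Suc i), Inl (r (Suc (n - Suc i)))) \<in> trans ?U"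
      using rt by (simp add: U_simps)
    moreover have "Suc (n - Suc i) = n - i" using True by simp
    ultimately have "(Inl (r (n - Suc i)), w (n - Suc i), Inl (r (n - i))) \<in> trans ?U" by (simp only:)
    moreover have "ps (Suc i) = Inl (r (n - Suc i))" using True by (intro psle) simp
    moreover have "ps i = Inl (r (n - i))" using True by (intro psle) simp
    moreover have "ws i = w (n - Suc i)" using True by (rule wslt)
    ultimately show ?thesis by (simp only:)
  next
    case False
    have "(Inl (snd (predA A (c (i - n)))), fst (predA A (c (i - n))), Inl (c (i - n))) \<in> trans ?U"
      using pre[OF cst[of "i - n"]] by (simp add: U_simps)
    moreover have "Suc i - n = Suc (i - n)" using False by simp
    hence "ps (Suc i) = Inl (snd (predA A (c (i - n))))" using False psge[of "Suc i"] cS by simp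
    moreover have "ps i = Inl (c (i - n))" using False by (intro psge) simp
    moreover have "ws i = fst (predA A (c (i - n)))" using False by (intro wsge) simp
    ultimately show ?thesis by (simp only:)
  qed
  define H where "H = rec_nat [(ps 0, Inr q)]
      (\<lambda>i h. h @ [(ps (Suc i), strat h (map ws [0..<i]) (ws i) (ps (Suc i)))])"
  have H0: "H 0 = [(ps 0, Inr q)]"
    and HS: "H (Suc i) = H i @ [(ps (Suc i), strat (H i) (map ws [0..<i]) (ws i) (ps (Suc i)))]" for i
    unfolding H_def by simp_all
  define qs where "qs i = snd (H i ! i)" for i
  have Hlen: "length (H i) = Suc i" for i by (induction i) (simp_all add: H0 HS)
  have Hnth: "\<forall>j\<le>i. H i ! j = (ps j, qs j)" for i
  proof (induction i)
    case 0 then show ?case by (simp add: H0 qs_def)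
  next
    case (Suc i)
    show ?case
    proof (intro allI impI)
      fix j assume "j \<le> Suc i"
      show "H (Suc i) ! j = (ps j, qs j)"
      proof (cases "j = Suc i")
        case True then show ?thesis using Hlen[of i] by (simp add: HS qs_def nth_append)
      next
        case False
        hence "j \<le> i" using \<open>j \<le> Suc i\<close> by simp
        then show ?thesis using Suc Hlen[of i] by (simp add: HS nth_append)
      qed
    qed
  qed
  have Hmap: "map (\<lambda>j. (ps j, qs j)) [0..<Suc i] = H i" for i
    by (rule nth_equalityI) (auto simp: Hlen Hnth simp del: upt_Suc)
  have "bw_di_play ?U strat (Inl (r n)) (Inr q) ps qs ws"
    unfolding bw_di_play_def
  proof (intro conjI allI)
    show "ps 0 = Inl (r n)" unfolding ps_def by simp
    show "qs 0 = Inr q" unfolding qs_def by (simp add: H0)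
    show "(ps (Suc i), ws i, ps i) \<in> trans ?U" for i by (rule pst)
    show "qs (Suc i) = strat (map (\<lambda>j. (ps j, qs j)) [0..<Suc i]) (map ws [0..<i]) (ws i) (ps (Suc i))" for i
      unfolding Hmap qs_def[of "Suc i"] using Hlen[of i] by (simp add: HS nth_append)
  qed
  hence win: "bw_di_winning ?U ps qs ws" by (rule strat)
  have qt: "(qs (Suc i), ws i, qs i) \<in> trans ?U" for i using win unfolding bw_di_winning_def by blast
  have inr0: "\<exists>p. qs i = Inr p" for i
  proof (induction i)
    case 0 then show ?case unfolding qs_def by (simp add: H0)
  next
    case (Suc i)
    then obtain p where "qs i = Inr p" by blast
    hence "(qs (Suc i), ws i, Inr p) \<in> trans ?U" using qt[of i] by simp
    thus ?case by (rule U_Inr_tgt)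
  qed
  have inr: "qs i = Inr (projr (qs i))" for i using inr0[of i] by auto
  define f where "f i = projr (qs (n - i))" for i
  have "goodpre B w (\<lambda>i. r i \<in> final A) n f"
    unfolding goodpre_def
  proof (intro conjI allI impI)
    have "ps n \<in> init ?U" using r0 unfolding ps_def by (simp add: U_simps)
    hence "qs n \<in> init ?U" using win unfolding bw_di_winning_def by blast
    hence "Inr (projr (qs n)) \<in> init ?U" using inr[of n] by metis
    thus "f 0 \<in> init B" unfolding f_def by (simp add: U_simps)
  next
    fix i assume i: "i < n"
    have e1: "Suc (n - Suc i) = n - i" using i by simp
    have e2: "ws (n - Suc i) = w i" using i unfolding ws_def by simp
    have "(qs (Suc (n - Suc i)), ws (n - Suc i), qs (n - Suc i)) \<in> trans ?U" by (rule qt)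
    hence "(qs (n - i), w i, qs (n - Suc i)) \<in> trans ?U" using e1 e2 by simp
    hence "(Inr (projr (qs (n - i))), w i, Inr (projr (qs (n - Suc i)))) \<in> trans ?U"
      using inr[of "n - i"] inr[of "n - Suc i"] by metis
    thus "(f i, w i, f (Suc i)) \<in> trans B" unfolding f_def by (simp add: U_simps)
  next
    fix i assume i: "i \<le> n" "r i \<in> final A"
    have "ps (n - i) = Inl (r i)" using i unfolding ps_def by simp
    hence "ps (n - i) \<in> final ?U" using i by (simp add: U_simps)
    hence "qs (n - i) \<in> final ?U" using win unfolding bw_di_winning_def by blast
    hence "Inr (projr (qs (n - i))) \<in> final ?U" using inr[of "n - i"] by metis
    thus "f i \<in> final B" unfolding f_def by (simp add: U_simps)
  qed
  thus ?thesis by blast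
qed

theorem theorem4p2:
  fixes A :: "('s, 'a) nba" and B :: "('t, 'a) nba"
    and R :: "'s + 't \<Rightarrow> 's + 't \<Rightarrow> bool"
  assumes "nba A" and "nba B" and "alph A = alph B"
    and "R = bw_di_sim (nba_union A B) \<or> R = bw_di_trinc (nba_union A B)"
    and "\<forall>p \<in> final A. \<exists>q \<in> final B. R (Inl p) (Inr q)"
  shows "lang A \<subseteq> lang B"
proof
  fix w assume "w \<in> lang A"
  then obtain r where r0: "r 0 \<in> init A" and rt: "\<forall>i. (r i, w i, r (Suc i)) \<in> trans A"
    and rf: "\<exists>\<^sub>\<infinity>i. r i \<in> final A" unfolding lang_def by blast
  have sub: "{n. r n \<in> final A} \<subseteq> {n. \<exists>f. goodpre B w (\<lambda>i. r i \<in> final A) n f}"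
  proof
    fix n assume "n \<in> {n. r n \<in> final A}"
    then obtain q where q: "q \<in> final B" "R (Inl (r n)) (Inr q)" using assms(5) by blast
    from assms(4) show "n \<in> {n. \<exists>f. goodpre B w (\<lambda>i. r i \<in> final A) n f}"
    proof
      assume "R = bw_di_sim (nba_union A B)"
      hence "bw_di_sim (nba_union A B) (Inl (r n)) (Inr q)" using q by simp
      hence "\<exists>f. goodpre B w (\<lambda>i. r i \<in> final A) n f" by (rule sim_case[OF assms(1) _ r0 rt])
      thus ?thesis by simp
    next
      assume "R = bw_di_trinc (nba_union A B)"
      hence "bw_di_trinc (nba_union A B) (Inl (r n)) (Inr q)" using q by simp
      hence "\<exists>f. goodpre B w (\<lambda>i. r i \<in> final A) n f" by (rule trinc_case[OF _ r0 rt])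
      thus ?thesis by simp
    qed
  qed
  have "infinite {n. r n \<in> final A}" using rf by (simp add: INFM_iff_infinite)
  hence "infinite {n. \<exists>f. goodpre B w (\<lambda>i. r i \<in> final A) n f}" using sub finite_subset by blast
  from koenig[OF assms(2) this] obtain \<rho> where
    p0: "\<rho> 0 \<in> init B" and pt: "\<forall>i. (\<rho> i, w i, \<rho> (Suc i)) \<in> trans B"
    and pf: "\<forall>i. r i \<in> final A \<longrightarrow> \<rho> i \<in> final B" by blast
  have "\<exists>\<^sub>\<infinity>i. \<rho> i \<in> final B" using rf by (rule INFM_mono) (use pf in blast)
  thus "w \<in> lang B" unfolding lang_def using p0 pt by blast
qed

end
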